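(* Assume $f$ satisfies conditions (A0)–(A3) below, with $R$ the constant from (A1). Then every $2\pi$-periodic solution $x$ of $\ddot x(t)=f(t,x(t),\mathbf x_t,\dot x(t))$ satisfies $|x(t)|\le R$ for all $t\in\mathbb R$.
   Context: Let $n,m\ge 1$ be integers, $\mathbf V=\mathbb R^n$ with Euclidean inner product $x\bullet z$ and norm $|x|$. For $\mathbf y=(y^1,\dots,y^m)\in\mathbf V^m$ put $|\mathbf y|:=\max_{j}|y^j|$. Fix reals $0=\tau_0<\tau_1<\dots<\tau_m<2\pi$ with $\tau_{m-j+1}=2\pi-\tau_j$ for $j=1,\dots,m$. Let $f:\mathbb R\times\mathbf V\times\mathbf V^m\times\mathbf V\to\mathbf V$, and for $x:\mathbb R\to\mathbf V$ put $\mathbf x_t:=(x(t-\tau_1),\dots,x(t-\tau_m))$. A $2\pi$-periodic solution is a $C^2$ function $x:\mathbb R\to\mathbf V$ with $x(t+2\pi)=x(t)$ and $\ddot x(t)=f(t,x(t),\mathbf x_t,\dot x(t))$ for all $t$. Conditions: (A0) $f$ is continuous and $2\pi$-periodic in $t$. (A1) There is $R>0$ such that for all $t$, $x,z\in\mathbf V$, $\mathbf y\in\mathbf V^m$: if $|x|\ge R$, $|\mathbf y|\le|x|$ and $x\bullet z=0$, then $x\bullet f(t,x,\mathbf y,z)>0$. (A2) There is a continuous $\phi:[0,\infty)\to(0,\infty)$ with $\int_0^\infty \frac{s\,ds}{\phi(s)}=\infty$ and $|f(t,x,\mathbf y,z)|\le\phi(|z|)$ whenever $|x|\le R$, $|\mathbf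 y|\le R$. (A3) There are $\alpha>0,K>0$ with $|f(t,x,\mathbf y,z)|\le\alpha(x\bullet f(t,x,\mathbf y,z)+|z|^2)+K$ whenever $|x|\le R$, $|\mathbf y|\le R$. *)

theory Defs
  imports "HOL-Analysis.Analysis"
begin

text \<open>Elements of V^m are represented as functions nat => V, of which only the
 coordinates 1..m are meaningful. The max-norm |y| = max_j |y^j|.\<close>
definition maxnorm :: "nat \<Rightarrow> (nat \<Rightarrow> 'a::real_normed_vector) \<Rightarrow> real" where
  "maxnorm m y = Max ((\<lambda>j. norm (y j)) ` {1..m})"

definition delayed :: "(nat \<Rightarrow> real) \<Rightarrow> (real \<Rightarrow> 'a) \<Rightarrow> real \<Rightarrow> nat \<Rightarrow> 'a" where
  "delayed tau x t = (\<lambda>j. x (t - tau j))"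

definition periodic_solution ::
  "(real \<Rightarrow> 'a::euclidean_space \<Rightarrow> (nat \<Rightarrow> 'a) \<Rightarrow> 'a \<Rightarrow> 'a) \<Rightarrow> (nat \<Rightarrow> real) \<Rightarrow> (real \<Rightarrow> 'a) \<Rightarrow> bool"
  where
  "periodic_solution f tau x \<longleftrightarrow>
     (\<exists>x' x''. continuous_on UNIV x'' \<and>
        (\<forall>t. (x has_vector_derivative x' t) (at t) \<and>
             (x' has_vector_derivative x'' t) (at t) \<and>
             x (t + 2 * pi) = x t \<and>
             x'' t = f t (x t) (delayed tau x t) (x' t)))"

end

theory Submission
  imports Defs
begin

lemma inner_vd:
  fixes u v :: "real \<Rightarrow> 'a::real_inner"
  assumes "(u has_vector_derivative u') (at t)" "(v has_vector_derivative v') (at t)"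
  shows "((\<lambda>t. u t \<bullet> v t) has_real_derivative (u' \<bullet> v t + u t \<bullet> v')) (at t)"
proof -
  have "((\<lambda>t. u t \<bullet> v t) has_derivative (\<lambda>h. u t \<bullet> (h *\<^sub>R v') + (h *\<^sub>R u') \<bullet> v t)) (at t)"
    using assms unfolding has_vector_derivative_def by (intro has_derivative_inner) auto
  then show ?thesis unfolding has_field_derivative_def
    by (rule has_derivative_eq_rhs) (auto simp: algebra_simps fun_eq_iff)
qed

lemma per_int:
  fixes x :: "real \<Rightarrow> 'a"
  assumes "\<And>t. x (t + 2*pi) = x t"
  shows "x (t + 2*pi * of_int k) = x t"
proof -
  have n: "x (s + 2*pi * real n) = x s" for s n
    by (induction n) (auto simp: algebra_simps assms[of "s + 2*pi * real _", simplified algebra_simps] dest: sym)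
  show ?thesis
  proof (cases "k \<ge> 0")
    case True
    then show ?thesis using n[of t "nat k"] by simp
  next
    case False
    have "x (t + 2*pi * of_int k + 2*pi * real (nat (-k))) = x (t + 2*pi * of_int k)" by (rule n)
    then show ?thesis using False by simp
  qed
qed

theorem lemma3p2:
  fixes f :: "real \<Rightarrow> 'a::euclidean_space \<Rightarrow> (nat \<Rightarrow> 'a) \<Rightarrow> 'a \<Rightarrow> 'a"
    and tau :: "nat \<Rightarrow> real" and m :: nat and R :: real
    and x :: "real \<Rightarrow> 'a"
  assumes m: "m \<ge> 1"
    and tau0: "tau 0 = 0"
    and tau_mono: "\<And>j. j < m \<Longrightarrow> tau j < tau (Suc j)"
    and tau_lt: "tau m < 2 * pi"
    and tau_sym: "\<And>j. j \<in> {1..m} \<Longrightarrow> tau (m - j + 1) = 2 * pi - tau j"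
    and f_dep: "\<And>t u y y' z. (\<forall>j\<in>{1..m}. y j = y' j) \<Longrightarrow> f t u y z = f t u y' z"
    and A0_cont: "continuous_on UNIV (\<lambda>(t, u, y, z). f t u y z)"
    and A0_per: "\<And>t u y z. f (t + 2 * pi) u y z = f t u y z"
    and R: "R > 0"
    and A1: "\<And>t u y z. norm u \<ge> R \<Longrightarrow> maxnorm m y \<le> norm u \<Longrightarrow> u \<bullet> z = 0
               \<Longrightarrow> u \<bullet> f t u y z > 0"
    and A2: "\<exists>\<phi>::real \<Rightarrow> real. continuous_on {0..} \<phi> \<and> (\<forall>s\<ge>0. \<phi> s > 0) \<and>
               filterlim (\<lambda>b. integral {0..b} (\<lambda>s. s / \<phi> s)) at_top at_top \<and>
               (\<forall>t u y z. norm u \<le> R \<longrightarrow> maxnorm m y \<le> R \<longrightarrow> norm (f t u y z) \<le> \<phi> (norm z))"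
    and A3: "\<exists>\<alpha> K. \<alpha> > 0 \<and> K > 0 \<and>
               (\<forall>t u y z. norm u \<le> R \<longrightarrow> maxnorm m y \<le> R \<longrightarrow>
                  norm (f t u y z) \<le> \<alpha> * (u \<bullet> f t u y z + (norm z)\<^sup>2) + K)"
    and sol: "periodic_solution f tau x"
  shows "\<forall>t. norm (x t) \<le> R"
proof -
  obtain x' x'' where xc: "continuous_on UNIV x''"
    and xd: "\<And>t. (x has_vector_derivative x' t) (at t)"
    and xd2: "\<And>t. (x' has_vector_derivative x'' t) (at t)"
    and xp: "\<And>t. x (t + 2 * pi) = x t"
    and xe: "\<And>t. x'' t = f t (x t) (delayed tau x t) (x' t)"
    using sol unfolding periodic_solution_def by blast
  have contx: "continuous_on UNIV x"
    using xd by (meson continuous_at_imp_continuous_on has_vector_derivative_continuous)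
  obtain t0 where t0: "t0 \<in> {0..2*pi}" and t0max: "\<And>s. s \<in> {0..2*pi} \<Longrightarrow> norm (x s) \<le> norm (x t0)"
  proof -
    have "continuous_on {0..2*pi} (\<lambda>t. norm (x t))"
      by (intro continuous_on_norm continuous_on_subset[OF contx]) auto
    moreover have "{0..2*pi} \<noteq> ({}::real set)" by simp
    ultimately show ?thesis using continuous_attains_sup[OF compact_Icc] that by blast
  qed
  have gmax: "norm (x t) \<le> norm (x t0)" for t
  proof -
    define k where "k = \<lfloor>t / (2*pi)\<rfloor>"
    define s where "s = t - 2*pi * of_int k"
    have "of_int k \<le> t / (2*pi)" "t / (2*pi) < of_int k + 1" unfolding k_def by linarith+
    then have "2*pi * of_int k \<le> t" "t < 2*pi * of_int k + 2*pi"
      by (simp_all add: field_simps)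
    then have "s \<in> {0..2*pi}" unfolding s_def by auto
    moreover have "x t = x s" using per_int[of x s k, OF xp] unfolding s_def by simp
    ultimately show ?thesis using t0max by simp
  qed
  show ?thesis
  proof (rule ccontr)
    assume "\<not> ?thesis"
    then obtain t1 where "norm (x t1) > R" by (auto simp: not_le)
    with gmax[of t1] have big: "norm (x t0) > R" by linarith
    define r where "r = (\<lambda>t. x t \<bullet> x t)"
    define g where "g = (\<lambda>t. x t \<bullet> x' t)"
    have rd: "(r has_real_derivative 2 * g t) (at t)" for t
      using inner_vd[OF xd xd, of t] unfolding r_def g_def by (simp add: inner_commute)
    have rmax: "r s \<le> r t0" for s
    proof -
      have "norm (x s) ^ 2 \<le> norm (x t0) ^ 2" using gmax[of s] by (intro power_mono) auto
      then show ?thesis unfolding r_def by (simp add: power2_norm_eq_inner)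
    qed
    have "2 * g t0 = 0"
      by (rule DERIV_local_max[OF rd, of 1]) (auto simp: rmax)
    then have g0: "g t0 = 0" by simp
    have ymax: "maxnorm m (delayed tau x t0) \<le> norm (x t0)"
      unfolding maxnorm_def delayed_def using m
      by (subst Max_le_iff) (auto simp: gmax)
    have pos: "x t0 \<bullet> f t0 (x t0) (delayed tau x t0) (x' t0) > 0"
      by (rule A1) (use big ymax g0 in \<open>auto simp: g_def\<close>)
    have gd: "(g has_real_derivative (x' t0 \<bullet> x' t0 + x t0 \<bullet> x'' t0)) (at t0)"
      using inner_vd[OF xd xd2, of t0] unfolding g_def by simp
    have "x' t0 \<bullet> x' t0 + x t0 \<bullet> x'' t0 > 0"
      using pos xe[of t0] by (simp add: add_nonneg_pos)
    from DERIV_pos_inc_right[OF gd this] obtain d where d: "d > 0"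
      and dinc: "\<And>h. h > 0 \<Longrightarrow> h < d \<Longrightarrow> g t0 < g (t0 + h)" by blast
    have "t0 < t0 + d/2" using d by simp
    from MVT2[OF this, of r "\<lambda>t. 2 * g t"] rd obtain z where
      z: "t0 < z" "z < t0 + d/2" "r (t0 + d/2) - r t0 = (t0 + d/2 - t0) * (2 * g z)" by blast
    have "g z > 0" using dinc[of "z - t0"] z d g0 by simp
    then have "d * g z > 0" using d by simp
    then have "r (t0 + d/2) > r t0" using z by simp
    with rmax show False by (meson not_le)
  qed
qed

end
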